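(* Let $G$ be a harmonic-even partial cube and let $F_{ab},F_{cd}$ be any two $\Theta$-classes of $G$. Then there exists a convex cycle in $G$ that contains an edge of $F_{ab}$ and an edge of $F_{cd}$.
   Context: A partial cube is a graph isometrically embeddable into a hypercube. On edges define $ab\,\Theta\,xy$ iff $d(a,x)+d(b,y)\neq d(a,y)+d(b,x)$ ($d$ the shortest-path distance); in a partial cube this is an equivalence relation, and $F_{uv}$ denotes the $\Theta$-class of edge $uv$; $i(G)$ is the number of $\Theta$-classes. A graph is harmonic-even if every vertex $v$ has a unique vertex $\bar v$ at distance $\mathrm{diam}(G)$ and $\bar u\bar v$ is an edge whenever $uv$ is an edge. A subgraph $H$ is convex if every shortest path of $G$ between vertices of $H$ lies in $H$; a convex cycle is a cycle that is a convex subgraph. *)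

theory Defs
  imports Main
begin

definition graph :: "'a set \<Rightarrow> ('a \<Rightarrow> 'a \<Rightarrow> bool) \<Rightarrow> bool" where
  "graph V E \<longleftrightarrow> (\<forall>u v. E u v \<longrightarrow> u \<in> V \<and> v \<in> V \<and> u \<noteq> v \<and> E v u)"

definition walk :: "'a set \<Rightarrow> ('a \<Rightarrow> 'a \<Rightarrow> bool) \<Rightarrow> 'a list \<Rightarrow> bool" where
  "walk V E p \<longleftrightarrow> p \<noteq> [] \<and> set p \<subseteq> V \<and> (\<forall>i. Suc i < length p \<longrightarrow> E (p ! i) (p ! Suc i))"

definition walk_betw :: "'a set \<Rightarrow> ('a \<Rightarrow> 'a \<Rightarrow> bool) \<Rightarrow> 'a \<Rightarrow> 'a list \<Rightarrow> 'a \<Rightarrow> bool" where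
  "walk_betw V E u p v \<longleftrightarrow> walk V E p \<and> hd p = u \<and> last p = v"

definition connected_graph :: "'a set \<Rightarrow> ('a \<Rightarrow> 'a \<Rightarrow> bool) \<Rightarrow> bool" where
  "connected_graph V E \<longleftrightarrow> (\<forall>u\<in>V. \<forall>v\<in>V. \<exists>p. walk_betw V E u p v)"

definition dist :: "'a set \<Rightarrow> ('a \<Rightarrow> 'a \<Rightarrow> bool) \<Rightarrow> 'a \<Rightarrow> 'a \<Rightarrow> nat" where
  "dist V E u v = (LEAST n. \<exists>p. walk_betw V E u p v \<and> length p = Suc n)"

text \<open>Partial cube: connected graph isometrically embeddable in a hypercube Q_n,
  whose vertices are the subsets of {..<n} with Hamming distance = size of symmetric difference.\<close>
definition partial_cube :: "'a set \<Rightarrow> ('a \<Rightarrow> 'a \<Rightarrow> bool) \<Rightarrow> bool" where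
  "partial_cube V E \<longleftrightarrow> graph V E \<and> connected_graph V E \<and>
     (\<exists>(n::nat) (f :: 'a \<Rightarrow> nat set). (\<forall>v\<in>V. f v \<subseteq> {..<n}) \<and>
        (\<forall>u\<in>V. \<forall>v\<in>V. dist V E u v = card ((f u - f v) \<union> (f v - f u))))"

text \<open>The relation Theta on edges (edges given as ordered pairs; the relation is
  invariant under reorienting both edges).\<close>
definition Theta :: "'a set \<Rightarrow> ('a \<Rightarrow> 'a \<Rightarrow> bool) \<Rightarrow> 'a \<times> 'a \<Rightarrow> 'a \<times> 'a \<Rightarrow> bool" where
  "Theta V E e f \<longleftrightarrow> (case e of (a, b) \<Rightarrow> case f of (x, y) \<Rightarrow>
      dist V E a x + dist V E b y \<noteq> dist V E a y + dist V E b x)"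

definition diam :: "'a set \<Rightarrow> ('a \<Rightarrow> 'a \<Rightarrow> bool) \<Rightarrow> nat" where
  "diam V E = Max {dist V E u v | u v. u \<in> V \<and> v \<in> V}"

definition harmonic_even :: "'a set \<Rightarrow> ('a \<Rightarrow> 'a \<Rightarrow> bool) \<Rightarrow> bool" where
  "harmonic_even V E \<longleftrightarrow>
     (\<forall>v\<in>V. \<exists>!w. w \<in> V \<and> dist V E v w = diam V E) \<and>
     (\<forall>u v. E u v \<longrightarrow> E (THE w. w \<in> V \<and> dist V E u w = diam V E)
                          (THE w. w \<in> V \<and> dist V E v w = diam V E))"

definition is_cycle :: "'a set \<Rightarrow> ('a \<Rightarrow> 'a \<Rightarrow> bool) \<Rightarrow> 'a list \<Rightarrow> bool" where
  "is_cycle V E cs \<longleftrightarrow> length cs \<ge> 3 \<and> distinct cs \<and> set cs \<subseteq> V \<and>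
     (\<forall>i < length cs. E (cs ! i) (cs ! ((i + 1) mod length cs)))"

definition cycle_edges :: "'a list \<Rightarrow> ('a \<times> 'a) set" where
  "cycle_edges cs = {(cs ! i, cs ! ((i + 1) mod length cs)) | i. i < length cs} \<union>
                    {(cs ! ((i + 1) mod length cs), cs ! i) | i. i < length cs}"

definition convex_subgraph :: "'a set \<Rightarrow> ('a \<Rightarrow> 'a \<Rightarrow> bool) \<Rightarrow> 'a set \<Rightarrow> ('a \<times> 'a) set \<Rightarrow> bool" where
  "convex_subgraph V E VH EH \<longleftrightarrow>
     (\<forall>u\<in>VH. \<forall>v\<in>VH. \<forall>p. walk_betw V E u p v \<and> length p = Suc (dist V E u v) \<longrightarrow>
        set p \<subseteq> VH \<and> (\<forall>i. Suc i < length p \<longrightarrow> (p ! i, p ! Suc i) \<in> EH))"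

definition convex_cycle :: "'a set \<Rightarrow> ('a \<Rightarrow> 'a \<Rightarrow> bool) \<Rightarrow> 'a list \<Rightarrow> bool" where
  "convex_cycle V E cs \<longleftrightarrow> is_cycle V E cs \<and> convex_subgraph V E (set cs) (cycle_edges cs)"

end

theory Submission imports Defs begin

fun nk :: "('a \<Rightarrow> 'a \<Rightarrow> bool) \<Rightarrow> 'a list \<Rightarrow> nat" where
  "nk P (x # y # r) = (if P x y then 1 else 0) + nk P (y # r)"
| "nk P _ = 0"

lemma nk_app: "nk P (xs @ y # ys) = nk P (xs @ [y]) + nk P (y # ys)"
proof (induction xs)
  case Nil then show ?case by simp
next
  case (Cons x xs) then show ?case by (cases xs) auto
qed

definition cat :: "'a list \<Rightarrow> 'a list \<Rightarrow> 'a list" (infixl "\<oplus>" 65) where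
  "p \<oplus> q = p @ tl q"

lemma nk_cat: "p \<noteq> [] \<Longrightarrow> q \<noteq> [] \<Longrightarrow> last p = hd q \<Longrightarrow> nk P (p \<oplus> q) = nk P p + nk P q"
proof -
  assume a: "p \<noteq> []" "q \<noteq> []" "last p = hd q"
  have p: "p = butlast p @ [hd q]" using a by (metis append_butlast_last_id)
  have q: "q = hd q # tl q" using a by simp
  have "p \<oplus> q = butlast p @ hd q # tl q" unfolding cat_def using p by (metis append.assoc append_Cons append_Nil)
  then have "nk P (p \<oplus> q) = nk P (butlast p @ [hd q]) + nk P (hd q # tl q)" using nk_app by metis
  then show ?thesis using p q by metis
qed

lemma cat_len: "q \<noteq> [] \<Longrightarrow> length (p \<oplus> q) = length p + length q - 1"
  unfolding cat_def by (cases q) auto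

lemma cat_hd: "p \<noteq> [] \<Longrightarrow> hd (p \<oplus> q) = hd p"
  unfolding cat_def by (cases p) auto

lemma cat_last: "p \<noteq> [] \<Longrightarrow> q \<noteq> [] \<Longrightarrow> last p = hd q \<Longrightarrow> last (p \<oplus> q) = last q"
  unfolding cat_def by (cases q) auto

lemma cat_ne: "p \<noteq> [] \<Longrightarrow> p \<oplus> q \<noteq> []"
  unfolding cat_def by simp

lemma cat_set: "p \<noteq> [] \<Longrightarrow> q \<noteq> [] \<Longrightarrow> last p = hd q \<Longrightarrow> set (p \<oplus> q) = set p \<union> set q"
  unfolding cat_def by (cases q) auto

lemma nk_rev: "(\<And>x y. P x y = P y x) \<Longrightarrow> nk P (rev p) = nk P p"
proof (induction P p rule: nk.induct)
  case (1 P x y r)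
  have "rev (x # y # r) = rev r @ y # [x]" by simp
  then have "nk P (rev (x # y # r)) = nk P (rev r @ [y]) + nk P [y, x]" using nk_app by metis
  also have "nk P (rev r @ [y]) = nk P (y # r)" using 1 by simp
  finally show ?case using 1(2)[of x y] by simp
qed auto

lemma nk_mono: "(\<And>x y. P x y \<Longrightarrow> Q x y) \<Longrightarrow> nk P p \<le> nk Q p"
  by (induction P p rule: nk.induct) auto

lemma nk_pos: "Suc s < length p \<Longrightarrow> P (p ! s) (p ! Suc s) \<Longrightarrow> 0 < nk P p"
proof (induction P p arbitrary: s rule: nk.induct)
  case (1 P x y r)
  then show ?case by (cases s) auto
qed auto

lemma nk_pos_ex: "0 < nk P p \<Longrightarrow> \<exists>s. Suc s < length p \<and> P (p ! s) (p ! Suc s)"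
proof (induction P p rule: nk.induct)
  case (1 P x y r)
  show ?case
  proof (cases "P x y")
    case True then show ?thesis by (intro exI[of _ 0]) auto
  next
    case False
    then obtain s where "Suc s < length (y # r)" "P ((y # r) ! s) ((y # r) ! Suc s)" using 1 by auto
    then show ?thesis by (intro exI[of _ "Suc s"]) auto
  qed
qed auto

definition seg :: "nat \<Rightarrow> nat \<Rightarrow> 'a list \<Rightarrow> 'a list" where
  "seg a b w = take (Suc b - a) (drop a w)"

lemma seg_len: "a \<le> b \<Longrightarrow> b < length w \<Longrightarrow> length (seg a b w) = Suc b - a"
  unfolding seg_def by simp

lemma seg_nth: "a \<le> b \<Longrightarrow> b < length w \<Longrightarrow> s \<le> b - a \<Longrightarrow> seg a b w ! s = w ! (a + s)"
  unfolding seg_def by simp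

lemma seg_ne: "a \<le> b \<Longrightarrow> b < length w \<Longrightarrow> seg a b w \<noteq> []"
  using seg_len by fastforce

lemma seg_hd: "a \<le> b \<Longrightarrow> b < length w \<Longrightarrow> hd (seg a b w) = w ! a"
  using seg_nth[of a b w 0] seg_ne[of a b w] by (simp add: hd_conv_nth)

lemma seg_last: "a \<le> b \<Longrightarrow> b < length w \<Longrightarrow> last (seg a b w) = w ! b"
  using seg_nth[of a b w "b - a"] seg_ne[of a b w] seg_len[of a b w] by (simp add: last_conv_nth)

lemma seg_set: "set (seg a b w) \<subseteq> set w"
  unfolding seg_def by (meson order_trans set_drop_subset set_take_subset)

lemma seg_all: "w \<noteq> [] \<Longrightarrow> seg 0 (length w - 1) w = w"
  unfolding seg_def by simp

lemma seg_cat: "a \<le> b \<Longrightarrow> b \<le> c \<Longrightarrow> c < length w \<Longrightarrow> seg a b w \<oplus> seg b c w = seg a c w"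
proof (rule nth_equalityI)
  assume h: "a \<le> b" "b \<le> c" "c < length w"
  have ne: "seg b c w \<noteq> []" using h seg_ne by auto
  show "length (seg a b w \<oplus> seg b c w) = length (seg a c w)"
    using h ne by (simp add: cat_len seg_len)
  fix s assume "s < length (seg a b w \<oplus> seg b c w)"
  then have s: "s \<le> c - a" using h ne by (simp add: cat_len seg_len)
  show "(seg a b w \<oplus> seg b c w) ! s = seg a c w ! s"
  proof (cases "s < Suc b - a")
    case True
    then show ?thesis using h s unfolding cat_def by (simp add: nth_append seg_len seg_nth)
  next
    case False
    have "tl (seg b c w) ! (s - (Suc b - a)) = seg b c w ! Suc (s - (Suc b - a))"
      using ne h s False by (simp add: nth_tl seg_len)
    also have "\<dots> = w ! (b + Suc (s - (Suc b - a)))" using h s False by (intro seg_nth) auto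
    also have "b + Suc (s - (Suc b - a)) = a + s" using h False by auto
    finally show ?thesis using h s False unfolding cat_def by (simp add: nth_append seg_len seg_nth)
  qed
qed


fun wk :: "'a set \<Rightarrow> ('a \<Rightarrow> 'a \<Rightarrow> bool) \<Rightarrow> 'a list \<Rightarrow> bool" where
  "wk V E [] = False"
| "wk V E [x] = (x \<in> V)"
| "wk V E (x # y # r) = (x \<in> V \<and> E x y \<and> wk V E (y # r))"

lemma walk_Cons2: "walk V E (x # y # r) \<longleftrightarrow> x \<in> V \<and> E x y \<and> walk V E (y # r)"
proof
  assume h: "walk V E (x # y # r)"
  have "E ((x # y # r) ! 0) ((x # y # r) ! Suc 0)" using h unfolding walk_def by (metis length_Cons zero_less_Suc Suc_less_eq)
  then have "E x y" by simp
  moreover have "walk V E (y # r)" unfolding walk_def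
  proof (intro conjI allI impI)
    show "set (y # r) \<subseteq> V" using h unfolding walk_def by auto
    fix i assume "Suc i < length (y # r)"
    then have "Suc (Suc i) < length (x # y # r)" by simp
    then have "E ((x # y # r) ! Suc i) ((x # y # r) ! Suc (Suc i))" using h unfolding walk_def by blast
    then show "E ((y # r) ! i) ((y # r) ! Suc i)" by simp
  qed simp
  ultimately show "x \<in> V \<and> E x y \<and> walk V E (y # r)" using h unfolding walk_def by auto
next
  assume h: "x \<in> V \<and> E x y \<and> walk V E (y # r)"
  show "walk V E (x # y # r)" unfolding walk_def
  proof (intro conjI allI impI)
    show "set (x # y # r) \<subseteq> V" using h unfolding walk_def by auto
    fix i assume i: "Suc i < length (x # y # r)"
    show "E ((x # y # r) ! i) ((x # y # r) ! Suc i)"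
    proof (cases i)
      case 0 then show ?thesis using h by simp
    next
      case (Suc k)
      then have "Suc k < length (y # r)" using i by simp
      then show ?thesis using h Suc unfolding walk_def by simp
    qed
  qed simp
qed

lemma walk_wk: "walk V E p = wk V E p"
proof (induction V E p rule: wk.induct)
  case (1 V E) then show ?case by (simp add: walk_def)
next
  case (2 V E x) then show ?case by (simp add: walk_def)
next
  case (3 V E x y r) then show ?case by (simp add: walk_Cons2)
qed

lemma wk_ne: "wk V E p \<Longrightarrow> p \<noteq> []" by auto

lemma wk_set: "wk V E p \<Longrightarrow> set p \<subseteq> V"
  by (simp add: walk_wk[symmetric] walk_def)

lemma wk_cat: "wk V E p \<Longrightarrow> wk V E q \<Longrightarrow> last p = hd q \<Longrightarrow> wk V E (p \<oplus> q)"
proof (induction V E p rule: wk.induct)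
  case (2 V E x)
  then show ?case unfolding cat_def by (cases q) auto
next
  case (3 V E x y r)
  have "wk V E ((y # r) \<oplus> q)" using 3 by simp
  then show ?case using 3(2) unfolding cat_def by simp
qed auto

lemma wk_rev: "(\<And>x y. E x y \<Longrightarrow> E y x) \<Longrightarrow> wk V E p \<Longrightarrow> wk V E (rev p)"
  unfolding walk_wk[symmetric] walk_def
proof (intro conjI allI impI)
  assume s: "\<And>x y. E x y \<Longrightarrow> E y x" and h: "p \<noteq> [] \<and> set p \<subseteq> V \<and> (\<forall>i. Suc i < length p \<longrightarrow> E (p ! i) (p ! Suc i))"
  show "rev p \<noteq> []" "set (rev p) \<subseteq> V" using h by auto
  fix i assume i: "Suc i < length (rev p)"
  have "E (p ! (length p - Suc (Suc i))) (p ! Suc (length p - Suc (Suc i)))" using h i by auto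
  moreover have "Suc (length p - Suc (Suc i)) = length p - Suc i" using i by auto
  ultimately have "E (p ! (length p - Suc i)) (p ! (length p - Suc (Suc i)))" using s by metis
  then show "E (rev p ! i) (rev p ! Suc i)" using i by (simp add: rev_nth)
qed

lemma wk_seg: "wk V E w \<Longrightarrow> a \<le> b \<Longrightarrow> b < length w \<Longrightarrow> wk V E (seg a b w)"
  unfolding walk_wk[symmetric] walk_def
proof (intro conjI allI impI)
  assume h: "w \<noteq> [] \<and> set w \<subseteq> V \<and> (\<forall>i. Suc i < length w \<longrightarrow> E (w ! i) (w ! Suc i))" and ab: "a \<le> b" "b < length w"
  show "seg a b w \<noteq> []" using ab seg_ne by auto
  show "set (seg a b w) \<subseteq> V" using h seg_set by fastforce
  fix i assume i: "Suc i < length (seg a b w)"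
  then have "E (w ! (a + i)) (w ! Suc (a + i))" using h ab by (simp add: seg_len)
  then show "E (seg a b w ! i) (seg a b w ! Suc i)" using i ab by (simp add: seg_len seg_nth)
qed

lemma wk_edge: "E x y \<Longrightarrow> x \<in> V \<Longrightarrow> y \<in> V \<Longrightarrow> wk V E [x, y]" by simp

lemma wk_nth: "wk V E p \<Longrightarrow> Suc i < length p \<Longrightarrow> E (p ! i) (p ! Suc i)"
  by (simp add: walk_wk[symmetric] walk_def)


lemma card_flip: "finite X \<Longrightarrow> card {k. (k \<in> X) \<noteq> (k = c)} = (if c \<in> X then card X - 1 else Suc (card X))"
proof (cases "c \<in> X")
  case True
  assume "finite X"
  have "{k. (k \<in> X) \<noteq> (k = c)} = X - {c}" using True by auto
  then show ?thesis using True \<open>finite X\<close> by simp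
next
  case False
  assume "finite X"
  have "{k. (k \<in> X) \<noteq> (k = c)} = insert c X" using False by auto
  then show ?thesis using False \<open>finite X\<close> by simp
qed

lemma par3: "even (A::nat) \<Longrightarrow> even B \<Longrightarrow> even C \<Longrightarrow> W = x + y + u \<Longrightarrow> A = g + y + h \<Longrightarrow>
  B = g + x + e \<Longrightarrow> C = e + u + h \<Longrightarrow> odd W \<Longrightarrow> False"
  by presburger

locale pc =
  fixes V :: "'a set" and E :: "'a \<Rightarrow> 'a \<Rightarrow> bool" and n :: nat and f :: "'a \<Rightarrow> nat set"
  assumes gr: "graph V E" and conn: "connected_graph V E"
  and fsub: "\<forall>v\<in>V. f v \<subseteq> {..<n}"
  and dst: "\<forall>u\<in>V. \<forall>v\<in>V. dist V E u v = card ((f u - f v) \<union> (f v - f u))"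
begin

definition Dd :: "'a \<Rightarrow> 'a \<Rightarrow> nat set" where "Dd u v = (f u - f v) \<union> (f v - f u)"

lemma Dd_mem: "k \<in> Dd u v \<longleftrightarrow> (k \<in> f u) \<noteq> (k \<in> f v)"
  unfolding Dd_def by auto

lemma Dd_sym: "Dd u v = Dd v u" unfolding Dd_def by auto

lemma Dd_self[simp]: "Dd x x = {}" unfolding Dd_def by auto

lemma Dd_fin: "u \<in> V \<Longrightarrow> v \<in> V \<Longrightarrow> finite (Dd u v)"
  unfolding Dd_def using fsub by (meson finite_Diff finite_UnI finite_lessThan finite_subset)

lemma Esym: "E x y \<Longrightarrow> E y x" using gr unfolding graph_def by blast
lemma EV: "E x y \<Longrightarrow> x \<in> V" "E x y \<Longrightarrow> y \<in> V" using gr unfolding graph_def by blast+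
lemma Eneq: "E x y \<Longrightarrow> x \<noteq> y" using gr unfolding graph_def by blast

lemma dist_eq: "u \<in> V \<Longrightarrow> v \<in> V \<Longrightarrow> dist V E u v = card (Dd u v)"
  using dst unfolding Dd_def by blast

lemma wk_walk_betw: "wk V E p \<Longrightarrow> walk_betw V E (hd p) p (last p)"
  by (simp add: walk_betw_def walk_wk)

lemma dist_le: "wk V E p \<Longrightarrow> dist V E (hd p) (last p) \<le> length p - 1"
proof -
  assume "wk V E p"
  then have h: "walk_betw V E (hd p) p (last p) \<and> length p = Suc (length p - 1)"
    using wk_walk_betw wk_ne by fastforce
  show ?thesis unfolding dist_def by (rule Least_le) (use h in blast)
qed

lemma wk_card: "wk V E p \<Longrightarrow> card (Dd (hd p) (last p)) \<le> length p - 1"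
  using dist_le dist_eq wk_set wk_ne by (metis hd_in_set last_in_set subsetD)

lemma dist_ex: "u \<in> V \<Longrightarrow> v \<in> V \<Longrightarrow> \<exists>p. walk_betw V E u p v \<and> length p = Suc (dist V E u v)"
proof -
  assume "u \<in> V" "v \<in> V"
  then obtain p where "walk_betw V E u p v" using conn unfolding connected_graph_def by blast
  then have "\<exists>m p. walk_betw V E u p v \<and> length p = Suc m"
    by (metis walk_betw_def walk_def length_greater_0_conv Suc_pred)
  then show ?thesis unfolding dist_def by (rule LeastI_ex)
qed

lemma inj: "u \<in> V \<Longrightarrow> v \<in> V \<Longrightarrow> Dd u v = {} \<Longrightarrow> u = v"
proof -
  assume h: "u \<in> V" "v \<in> V" "Dd u v = {}"
  then have "dist V E u v = 0" using dist_eq by simp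
  then obtain p where p: "walk_betw V E u p v" "length p = Suc 0" using dist_ex h by metis
  then obtain x where "p = [x]" by (metis length_0_conv length_Suc_conv)
  then show ?thesis using p unfolding walk_betw_def by (metis last_ConsL list.sel(1))
qed

definition cls :: "'a \<Rightarrow> 'a \<Rightarrow> nat" where "cls x y = the_elem (Dd x y)"

lemma cls_sym: "cls x y = cls y x" unfolding cls_def using Dd_sym by simp

lemma edge_Dd: "E x y \<Longrightarrow> Dd x y = {cls x y}"
proof -
  assume e: "E x y"
  have "wk V E [x, y]" using e EV by simp
  then have "card (Dd x y) \<le> 1" using wk_card by fastforce
  moreover have "Dd x y \<noteq> {}" using inj e EV Eneq by blast
  moreover have "finite (Dd x y)" using e EV Dd_fin by blast
  ultimately have "card (Dd x y) = 1" by (simp add: Suc_leI le_antisym card_gt_0_iff)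
  then show ?thesis unfolding cls_def by (metis card_1_singletonE the_elem_eq)
qed

lemma flip: "E x y \<Longrightarrow> k \<in> f y \<longleftrightarrow> (k \<in> f x) \<noteq> (k = cls x y)"
  using edge_Dd[of x y] Dd_mem[of k x y] by auto

lemma parity: "wk V E p \<Longrightarrow> (k \<in> Dd (hd p) (last p)) \<longleftrightarrow> odd (nk (\<lambda>x y. cls x y = k) p)"
proof (induction p rule: induct_list012)
  case (3 x y r)
  have e: "E x y" and w: "wk V E (y # r)" using "3.prems" by auto
  have ih: "k \<in> Dd y (last (y # r)) \<longleftrightarrow> odd (nk (\<lambda>x y. cls x y = k) (y # r))" using "3.IH"(2) w by simp
  have "k \<in> Dd x (last (y # r)) \<longleftrightarrow> (k = cls x y) \<noteq> (k \<in> Dd y (last (y # r)))"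
    using flip[OF e, of k] Dd_mem by auto
  then show ?case using ih by auto
qed auto

lemma card_par: "wk V E p \<Longrightarrow> even (card (Dd (hd p) (last p)) + (length p - 1))"
proof (induction p rule: induct_list012)
  case (3 x y r)
  have e: "E x y" and w: "wk V E (y # r)" using "3.prems" by auto
  have ih: "even (card (Dd y (last (y # r))) + length r)" using "3.IH"(2) w by simp
  have fin: "finite (Dd y (last (y # r)))" using w wk_set Dd_fin by (meson last_in_set list.set_intros(1) list.simps(3) subsetD)
  have "Dd x (last (y # r)) = {k. (k \<in> Dd y (last (y # r))) \<noteq> (k = cls x y)}"
    using flip[OF e] Dd_mem by auto
  then have "card (Dd x (last (y # r))) = (if cls x y \<in> Dd y (last (y # r)) then card (Dd y (last (y # r))) - 1 else Suc (card (Dd y (last (y # r)))))"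
    using card_flip[OF fin] by simp
  moreover have "cls x y \<in> Dd y (last (y # r)) \<Longrightarrow> card (Dd y (last (y # r))) > 0"
    using fin card_gt_0_iff by blast
  ultimately show ?case using ih by (cases "cls x y \<in> Dd y (last (y # r))") auto
qed auto

definition geo :: "'a list \<Rightarrow> bool" where
  "geo p \<longleftrightarrow> wk V E p \<and> card (Dd (hd p) (last p)) = length p - 1"

lemma geo_tl: "geo (x # y # r) \<Longrightarrow> geo (y # r) \<and> cls x y \<notin> Dd y (last (y # r))"
proof -
  assume g: "geo (x # y # r)"
  have e: "E x y" and w: "wk V E (y # r)" using g unfolding geo_def by auto
  have fin: "finite (Dd y (last (y # r)))" using w wk_set Dd_fin by (meson last_in_set list.set_intros(1) list.simps(3) subsetD)
  have le: "card (Dd y (last (y # r))) \<le> length r" using wk_card[OF w] by simp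
  have "Dd x (last (y # r)) = {k. (k \<in> Dd y (last (y # r))) \<noteq> (k = cls x y)}"
    using flip[OF e] Dd_mem by auto
  then have c: "card (Dd x (last (y # r))) = (if cls x y \<in> Dd y (last (y # r)) then card (Dd y (last (y # r))) - 1 else Suc (card (Dd y (last (y # r)))))"
    using card_flip[OF fin] by simp
  have eq: "card (Dd x (last (y # r))) = Suc (length r)" using g unfolding geo_def by simp
  show ?thesis using c eq le w unfolding geo_def by (cases "cls x y \<in> Dd y (last (y # r))") auto
qed

lemma geo_nk1: "geo p \<Longrightarrow> nk (\<lambda>x y. cls x y = k) p \<le> 1"
proof (induction p rule: induct_list012)
  case (3 x y r)
  have t: "geo (y # r)" "cls x y \<notin> Dd y (last (y # r))" using geo_tl[OF "3.prems"] by auto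
  have ih: "nk (\<lambda>x y. cls x y = k) (y # r) \<le> 1" using "3.IH"(2) t by simp
  have w: "wk V E (y # r)" using t unfolding geo_def by simp
  show ?case
  proof (cases "cls x y = k")
    case True
    then have "\<not> odd (nk (\<lambda>x y. cls x y = k) (y # r))" using parity[OF w, of k] t(2) by simp
    then show ?thesis using True ih by (cases "nk (\<lambda>x y. cls x y = k) (y # r)") auto
  next
    case False then show ?thesis using ih by simp
  qed
qed auto

lemma geo_nk: "geo p \<Longrightarrow> nk (\<lambda>x y. cls x y = k) p = (if k \<in> Dd (hd p) (last p) then 1 else 0)"
proof -
  assume g: "geo p"
  have "nk (\<lambda>x y. cls x y = k) p \<le> 1" using geo_nk1[OF g] .
  moreover have "k \<in> Dd (hd p) (last p) \<longleftrightarrow> odd (nk (\<lambda>x y. cls x y = k) p)"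
    using parity g unfolding geo_def by blast
  ultimately show ?thesis by (cases "nk (\<lambda>x y. cls x y = k) p") auto
qed

lemma geo_step: "geo p \<Longrightarrow> Suc s < length p \<Longrightarrow> cls (p ! s) (p ! Suc s) \<in> Dd (hd p) (last p)"
proof -
  assume g: "geo p" and s: "Suc s < length p"
  have "0 < nk (\<lambda>x y. cls x y = cls (p ! s) (p ! Suc s)) p" using nk_pos[OF s] by simp
  then show ?thesis using geo_nk[OF g] by (metis less_numeral_extra(3))
qed

lemma geo_ex: "u \<in> V \<Longrightarrow> v \<in> V \<Longrightarrow> \<exists>p. geo p \<and> hd p = u \<and> last p = v"
proof -
  assume h: "u \<in> V" "v \<in> V"
  obtain p where p: "walk_betw V E u p v" "length p = Suc (dist V E u v)" using dist_ex[OF h] by blast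
  then have "geo p" using h dist_eq unfolding geo_def walk_betw_def walk_wk by auto
  then show ?thesis using p unfolding walk_betw_def by blast
qed

lemma geo_of: "walk_betw V E u p v \<Longrightarrow> length p = Suc (dist V E u v) \<Longrightarrow> geo p"
proof -
  assume p: "walk_betw V E u p v" "length p = Suc (dist V E u v)"
  then have "wk V E p" "hd p = u" "last p = v" unfolding walk_betw_def walk_wk by auto
  then have "u \<in> V" "v \<in> V" using wk_set wk_ne by (metis hd_in_set last_in_set subsetD)+
  then show ?thesis using p \<open>wk V E p\<close> \<open>hd p = u\<close> \<open>last p = v\<close> dist_eq unfolding geo_def by auto
qed

lemma theta_same: "E a b \<Longrightarrow> E x y \<Longrightarrow> cls a b = cls x y \<Longrightarrow> Theta V E (a, b) (x, y)"
proof -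
  assume e: "E a b" "E x y" "cls a b = cls x y"
  define c where "c = cls a b"
  have V: "a \<in> V" "b \<in> V" "x \<in> V" "y \<in> V" using e EV by auto
  have fin: "finite (Dd a x)" using V Dd_fin by auto
  have fb: "\<And>q. q \<in> f b \<longleftrightarrow> (q \<in> f a) \<noteq> (q = c)" using flip[OF e(1)] c_def by auto
  have fy: "\<And>q. q \<in> f y \<longleftrightarrow> (q \<in> f x) \<noteq> (q = c)" using flip[OF e(2)] e(3) c_def by auto
  have 1: "Dd b y = Dd a x" using fb fy Dd_mem by auto
  have 2: "Dd a y = {q. (q \<in> Dd a x) \<noteq> (q = c)}" using fb fy Dd_mem by auto
  have 3: "Dd b x = {q. (q \<in> Dd a x) \<noteq> (q = c)}" using fb fy Dd_mem by auto
  have cy: "card (Dd a y) = (if c \<in> Dd a x then card (Dd a x) - 1 else Suc (card (Dd a x)))"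
    unfolding 2 by (rule card_flip[OF fin])
  have "c \<in> Dd a x \<Longrightarrow> card (Dd a x) > 0" using fin card_gt_0_iff by blast
  then have ne: "card (Dd a y) \<noteq> card (Dd a x)" using cy by (cases "c \<in> Dd a x") auto
  have "card (Dd b x) = card (Dd a y)" using 2 3 by simp
  then have "card (Dd a x) + card (Dd b y) \<noteq> card (Dd a y) + card (Dd b x)" using ne 1 by simp
  then have "dist V E a x + dist V E b y \<noteq> dist V E a y + dist V E b x"
    using dist_eq[OF V(1) V(3)] dist_eq[OF V(2) V(4)] dist_eq[OF V(1) V(4)] dist_eq[OF V(2) V(3)] by simp
  then show ?thesis unfolding Theta_def by simp
qed

lemma cat3: "wk V E p \<Longrightarrow> wk V E q \<Longrightarrow> wk V E r \<Longrightarrow> last p = hd q \<Longrightarrow> last q = hd r \<Longrightarrow>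
  wk V E (p \<oplus> q \<oplus> r) \<and> hd (p \<oplus> q \<oplus> r) = hd p \<and> last (p \<oplus> q \<oplus> r) = last r \<and>
  nk Q (p \<oplus> q \<oplus> r) = nk Q p + nk Q q + nk Q r \<and> length (p \<oplus> q \<oplus> r) = length p + length q + length r - 2"
proof -
  assume h: "wk V E p" "wk V E q" "wk V E r" "last p = hd q" "last q = hd r"
  have ne: "p \<noteq> []" "q \<noteq> []" "r \<noteq> []" using h by auto
  have pq: "wk V E (p \<oplus> q)" "hd (p \<oplus> q) = hd p" "last (p \<oplus> q) = last q" "p \<oplus> q \<noteq> []"
    "nk Q (p \<oplus> q) = nk Q p + nk Q q" "length (p \<oplus> q) = length p + length q - 1"
    using h ne wk_cat cat_hd cat_last cat_ne nk_cat cat_len by metis+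
  have "wk V E (p \<oplus> q \<oplus> r)" "hd (p \<oplus> q \<oplus> r) = hd p" "last (p \<oplus> q \<oplus> r) = last r"
    "nk Q (p \<oplus> q \<oplus> r) = nk Q p + nk Q q + nk Q r" "length (p \<oplus> q \<oplus> r) = length (p \<oplus> q) + length r - 1"
    using pq h ne wk_cat cat_hd cat_last nk_cat cat_len by metis+
  moreover have "length p \<ge> 1" "length q \<ge> 1" using ne by (auto simp: Suc_leI)
  ultimately show ?thesis using pq by simp
qed

definition SS :: "nat \<Rightarrow> nat \<Rightarrow> bool \<Rightarrow> 'a \<Rightarrow> 'a \<Rightarrow> bool" where
  "SS i j g x y \<longleftrightarrow> cls x y = j \<and> (i \<in> f x) = g \<and> (i \<in> f y) = g"

lemma SS_sym: "SS i j g x y = SS i j g y x" unfolding SS_def using cls_sym by auto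

lemma nkS_const: "wk V E p \<Longrightarrow> nk (\<lambda>x y. cls x y = i) p = 0 \<Longrightarrow>
  nk (SS i j g) p = (if (i \<in> f (hd p)) = g then nk (\<lambda>x y. cls x y = j) p else 0)"
proof (induction p rule: induct_list012)
  case (3 x y r)
  have e: "E x y" and w: "wk V E (y # r)" using "3.prems" by auto
  have c: "cls x y \<noteq> i" and z: "nk (\<lambda>x y. cls x y = i) (y # r) = 0" using "3.prems"(2) by (auto split: if_splits)
  have ih: "nk (SS i j g) (y # r) = (if (i \<in> f y) = g then nk (\<lambda>x y. cls x y = j) (y # r) else 0)"
    using "3.IH"(2) w z by simp
  have fy: "i \<in> f y \<longleftrightarrow> i \<in> f x" using flip[OF e, of i] c by auto
  show ?case using ih fy unfolding SS_def by auto
qed auto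

lemma geo_SS1: "geo p \<Longrightarrow> i \<notin> Dd (hd p) (last p) \<Longrightarrow>
   nk (SS i j g) p = (if (i \<in> f (hd p)) = g \<and> j \<in> Dd (hd p) (last p) then 1 else 0)"
proof -
  assume g: "geo p" "i \<notin> Dd (hd p) (last p)"
  have "nk (\<lambda>x y. cls x y = i) p = 0" using geo_nk[OF g(1), of i] g(2) by simp
  then show ?thesis using nkS_const[of p i j g] geo_nk[OF g(1), of j] g(1) unfolding geo_def by auto
qed

lemma geo_SS0: "geo p \<Longrightarrow> j \<notin> Dd (hd p) (last p) \<Longrightarrow> nk (SS i j g) p = 0"
proof -
  assume g: "geo p" "j \<notin> Dd (hd p) (last p)"
  have "nk (SS i j g) p \<le> nk (\<lambda>x y. cls x y = j) p" by (rule nk_mono) (simp add: SS_def)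
  then show ?thesis using geo_nk[OF g(1), of j] g(2) by simp
qed

end

locale he = pc +
  assumes hev: "harmonic_even V E" and finV: "finite V"
begin

definition anti :: "'a \<Rightarrow> 'a" where "anti v = (THE w. w \<in> V \<and> dist V E v w = diam V E)"

lemma anti_prop: "v \<in> V \<Longrightarrow> anti v \<in> V \<and> dist V E v (anti v) = diam V E"
proof -
  assume v: "v \<in> V"
  have "\<exists>!w. w \<in> V \<and> dist V E v w = diam V E" using hev v unfolding harmonic_even_def by blast
  then show ?thesis unfolding anti_def by (rule theI')
qed

lemma anti_E: "E u v \<Longrightarrow> E (anti u) (anti v)"
  using hev unfolding harmonic_even_def anti_def by blast

lemma diam_ge: "u \<in> V \<Longrightarrow> w \<in> V \<Longrightarrow> dist V E u w \<le> diam V E"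
proof -
  assume h: "u \<in> V" "w \<in> V"
  have "{dist V E u v | u v. u \<in> V \<and> v \<in> V} \<subseteq> (\<lambda>(u, v). dist V E u v) ` (V \<times> V)" by auto
  then have fin: "finite {dist V E u v | u v. u \<in> V \<and> v \<in> V}" using finV by (meson finite_SigmaI finite_imageI finite_subset)
  have "dist V E u w \<in> {dist V E u v | u v. u \<in> V \<and> v \<in> V}" using h by blast
  then show ?thesis unfolding diam_def using fin by (rule Max_ge[rotated])
qed

lemma anti_cls: "E x y \<Longrightarrow> cls (anti x) (anti y) = cls x y \<and> cls x y \<in> Dd x (anti x)"
proof -
  assume e: "E x y"
  have V: "x \<in> V" "y \<in> V" using e EV by auto
  have ax: "anti x \<in> V" "card (Dd x (anti x)) = diam V E" using anti_prop[OF V(1)] dist_eq V by auto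
  have ay: "anti y \<in> V" "card (Dd y (anti y)) = diam V E" using anti_prop[OF V(2)] dist_eq V by auto
  define X where "X = Dd x (anti x)"
  define k where "k = cls x y"
  define l where "l = cls (anti x) (anti y)"
  have fin: "finite X" using X_def V ax Dd_fin by auto
  have ea: "E (anti x) (anti y)" using anti_E[OF e] .
  have fy: "\<And>q. q \<in> f y \<longleftrightarrow> (q \<in> f x) \<noteq> (q = k)" using flip[OF e] k_def by auto
  have fay: "\<And>q. q \<in> f (anti y) \<longleftrightarrow> (q \<in> f (anti x)) \<noteq> (q = l)" using flip[OF ea] l_def by auto
  have d1: "Dd x (anti y) = {q. (q \<in> X) \<noteq> (q = l)}" using fay Dd_mem X_def by auto
  have d2: "Dd y (anti x) = {q. (q \<in> X) \<noteq> (q = k)}" using fy Dd_mem X_def by auto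
  have d3: "Dd y (anti y) = {q. (q \<in> X) \<noteq> ((q = k) \<noteq> (q = l))}" using fy fay Dd_mem X_def by auto
  have c1: "card (Dd x (anti y)) \<le> diam V E" using diam_ge[OF V(1) ay(1)] dist_eq V ay by auto
  have c2: "card (Dd y (anti x)) \<le> diam V E" using diam_ge[OF V(2) ax(1)] dist_eq V ax by auto
  have cc1: "card (Dd x (anti y)) = (if l \<in> X then card X - 1 else Suc (card X))"
    unfolding d1 by (rule card_flip[OF fin])
  have cc2: "card (Dd y (anti x)) = (if k \<in> X then card X - 1 else Suc (card X))"
    unfolding d2 by (rule card_flip[OF fin])
  have cX: "card X = diam V E" using ax X_def by simp
  have lX: "l \<in> X" using c1 cc1 cX by (cases "l \<in> X") auto
  have kX: "k \<in> X" using c2 cc2 cX by (cases "k \<in> X") auto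
  have "k = l"
  proof (rule ccontr)
    assume kl: "k \<noteq> l"
    have "Dd y (anti y) = X - {k, l}"
    proof (rule set_eqI)
      fix q show "q \<in> Dd y (anti y) \<longleftrightarrow> q \<in> X - {k, l}"
        unfolding d3 using kl kX lX by (cases "q = k"; cases "q = l") auto
    qed
    moreover have sub: "{k, l} \<subseteq> X" using kX lX by blast
    moreover have c2: "card {k, l} = 2" using kl by simp
    moreover have "card (X - {k, l}) = card X - card {k, l}" using sub fin by (meson card_Diff_subset finite_subset)
    moreover have "card {k, l} \<le> card X" using sub fin by (meson card_mono)
    ultimately have "card (Dd y (anti y)) = card X - 2" "card X \<ge> 2" by simp_all
    then show False using ay cX by simp
  qed
  then show ?thesis using kX k_def l_def X_def by auto
qed

lemma anti_inv: "E x y \<Longrightarrow> Dd y (anti y) = Dd x (anti x)"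
proof -
  assume e: "E x y"
  have "cls (anti x) (anti y) = cls x y" using anti_cls[OF e] by simp
  then show ?thesis using flip[OF e] flip[OF anti_E[OF e]] Dd_mem by auto
qed

lemma anti_walk: "wk V E p \<Longrightarrow> Dd (last p) (anti (last p)) = Dd (hd p) (anti (hd p))"
proof (induction p rule: induct_list012)
  case (3 x y r)
  have e: "E x y" and w: "wk V E (y # r)" using "3.prems" by auto
  show ?case using "3.IH"(2)[OF w] anti_inv[OF e] by simp
qed auto

lemma anti_const: "u \<in> V \<Longrightarrow> v \<in> V \<Longrightarrow> Dd u (anti u) = Dd v (anti v)"
proof -
  assume h: "u \<in> V" "v \<in> V"
  obtain p where "walk_betw V E u p v" using conn h unfolding connected_graph_def by blast
  then show ?thesis using anti_walk unfolding walk_betw_def walk_wk by metis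
qed

end

locale mw = pc +
  fixes P :: "'a \<Rightarrow> 'a \<Rightarrow> bool" and w :: "'a list"
  assumes Psym: "\<And>x y. P x y = P y x"
  and wkw: "wk V E w" and clw: "hd w = last w" and oddw: "odd (nk P w)"
  and minw: "\<And>w'. wk V E w' \<Longrightarrow> hd w' = last w' \<Longrightarrow> odd (nk P w') \<Longrightarrow> length w \<le> length w'"
begin

abbreviation L where "L \<equiv> length w - 1"

lemma short_even: "wk V E w' \<Longrightarrow> hd w' = last w' \<Longrightarrow> length w' < length w \<Longrightarrow> even (nk P w')"
  using minw by fastforce

lemma w_ne: "w \<noteq> []" using wkw by auto
lemma lenw: "length w = Suc L" using w_ne by simp
lemma wL: "w ! L = w ! 0" using clw w_ne by (simp add: hd_conv_nth last_conv_nth)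
lemma wV: "set w \<subseteq> V" using wkw wk_set by auto
lemma wnV: "s \<le> L \<Longrightarrow> w ! s \<in> V" using wV lenw by (metis le_imp_less_Suc nth_mem subsetD)

lemma seg_facts: "a \<le> b \<Longrightarrow> b \<le> L \<Longrightarrow> seg a b w \<noteq> [] \<and> hd (seg a b w) = w ! a \<and> last (seg a b w) = w ! b
   \<and> wk V E (seg a b w) \<and> length (seg a b w) = Suc b - a"
  using seg_ne seg_hd seg_last wk_seg[OF wkw] seg_len lenw by (metis le_imp_less_Suc)

lemma seg_split: "a \<le> b \<Longrightarrow> b \<le> c \<Longrightarrow> c \<le> L \<Longrightarrow> nk Q (seg a c w) = nk Q (seg a b w) + nk Q (seg b c w)"
proof -
  assume h: "a \<le> b" "b \<le> c" "c \<le> L"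
  have "seg a b w \<oplus> seg b c w = seg a c w" using h lenw by (intro seg_cat) auto
  moreover have "nk Q (seg a b w \<oplus> seg b c w) = nk Q (seg a b w) + nk Q (seg b c w)"
    using seg_facts h by (intro nk_cat) auto
  ultimately show ?thesis by simp
qed

lemma seg_w: "seg 0 L w = w" using seg_all w_ne by blast

lemma seg_le: "a \<le> b \<Longrightarrow> b \<le> L \<Longrightarrow> nk Q (seg a b w) \<le> nk Q w"
proof -
  assume h: "a \<le> b" "b \<le> L"
  have "nk Q (seg 0 L w) = nk Q (seg 0 a w) + nk Q (seg a L w)" using h by (intro seg_split) auto
  moreover have "nk Q (seg a L w) = nk Q (seg a b w) + nk Q (seg b L w)" using h by (intro seg_split) auto
  ultimately show ?thesis using seg_w by simp
qed

lemma iso: "a \<le> b \<Longrightarrow> b \<le> L \<Longrightarrow> min (b - a) (L - (b - a)) \<le> card (Dd (w ! a) (w ! b))"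
proof -
  assume ab: "a \<le> b" "b \<le> L"
  have Va: "w ! a \<in> V" and Vb: "w ! b \<in> V" using ab wnV by auto
  obtain R where R: "geo R" "hd R = w ! a" "last R = w ! b" using geo_ex[OF Va Vb] by blast
  have wR: "wk V E R" using R unfolding geo_def by auto
  then have neR: "R \<noteq> []" by auto
  have lR: "length R = Suc (card (Dd (w ! a) (w ! b)))" using R neR unfolding geo_def by auto
  define r where "r = card (Dd (w ! a) (w ! b))"
  define s1 where "s1 = seg a b w"
  define s2 where "s2 = seg b L w"
  define s3 where "s3 = seg 0 a w"
  have f1: "s1 \<noteq> [] \<and> hd s1 = w ! a \<and> last s1 = w ! b \<and> wk V E s1 \<and> length s1 = Suc b - a"
    using seg_facts ab s1_def by auto
  have f2: "s2 \<noteq> [] \<and> hd s2 = w ! b \<and> last s2 = w ! 0 \<and> wk V E s2 \<and> length s2 = Suc L - b"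
    using seg_facts[of b L] ab s2_def wL by auto
  have f3: "s3 \<noteq> [] \<and> hd s3 = w ! 0 \<and> last s3 = w ! a \<and> wk V E s3 \<and> length s3 = Suc a"
    using seg_facts[of 0 a] ab s3_def by auto
  have rR: "rev R \<noteq> [] \<and> hd (rev R) = w ! b \<and> last (rev R) = w ! a \<and> wk V E (rev R) \<and> nk P (rev R) = nk P R"
    using R neR wk_rev[OF _ wR] Esym nk_rev Psym by (auto simp: hd_rev last_rev)
  define W1 where "W1 = s1 \<oplus> rev R"
  have W1: "wk V E W1" "hd W1 = last W1" "nk P W1 = nk P s1 + nk P R" "length W1 = length s1 + length R - 1"
    using f1 rR wk_cat cat_hd cat_last nk_cat cat_len W1_def by (metis length_rev)+
  define W2 where "W2 = s2 \<oplus> s3 \<oplus> R"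
  have s23: "s2 \<oplus> s3 \<noteq> [] \<and> hd (s2 \<oplus> s3) = w ! b \<and> last (s2 \<oplus> s3) = w ! a \<and> wk V E (s2 \<oplus> s3)
     \<and> nk P (s2 \<oplus> s3) = nk P s2 + nk P s3 \<and> length (s2 \<oplus> s3) = length s2 + length s3 - 1"
    using f2 f3 wk_cat cat_hd cat_last nk_cat cat_len cat_ne by metis
  have W2: "wk V E W2" "hd W2 = last W2" "nk P W2 = nk P s2 + nk P s3 + nk P R" "length W2 = length (s2 \<oplus> s3) + length R - 1"
    using s23 R neR wR wk_cat cat_hd cat_last nk_cat cat_len W2_def by metis+
  have "nk P w = nk P s3 + nk P s1 + nk P s2"
    using seg_split[of 0 a L P] seg_split[of a b L P] ab seg_w s1_def s2_def s3_def by simp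
  then have "odd (nk P W1) \<or> odd (nk P W2)" using oddw W1(3) W2(3) by presburger
  then show ?thesis
  proof
    assume "odd (nk P W1)"
    then have "\<not> length W1 < length w" using short_even W1 by blast
    then show ?thesis using W1(4) f1 lR lenw r_def ab by simp
  next
    assume "odd (nk P W2)"
    then have "\<not> length W2 < length w" using short_even W2 by blast
    then show ?thesis using W2(4) s23 f2 f3 lR lenw r_def ab by simp
  qed
qed

lemma Lge4: "4 \<le> L \<and> even L"
proof -
  have "even (card (Dd (hd w) (last w)) + L)" using card_par[OF wkw] .
  then have ev: "even L" using clw by simp
  have "L \<noteq> 0"
  proof
    assume "L = 0"
    then obtain x where "w = [x]" using lenw by (metis length_0_conv length_Suc_conv)
    then show False using oddw by simp
  qed
  moreover have "L \<noteq> 2"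
  proof
    assume "L = 2"
    then obtain x y z where xyz: "w = [x, y, z]" using lenw by (metis length_0_conv length_Suc_conv numeral_2_eq_2)
    then have "x = z" using clw by simp
    then show False using oddw xyz Psym[of x y] by simp
  qed
  ultimately show ?thesis using ev by presburger
qed


lemma mw_rev: "mw V E n f P (rev w)"
proof -
  have "wk V E (rev w)" using wk_rev[OF _ wkw] Esym by blast
  moreover have "hd (rev w) = last (rev w)" using clw w_ne by (simp add: hd_rev last_rev)
  moreover have "nk P (rev w) = nk P w" using nk_rev Psym by blast
  ultimately show ?thesis unfolding mw_def mw_axioms_def using pc_axioms Psym oddw minw by auto
qed

lemma rot: "s \<le> L \<Longrightarrow> mw V E n f P (seg s L w \<oplus> seg 0 s w) \<and> (seg s L w \<oplus> seg 0 s w) ! 0 = w ! s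
   \<and> set (seg s L w \<oplus> seg 0 s w) = set w \<and> (\<forall>Q. nk Q (seg s L w \<oplus> seg 0 s w) = nk Q w)"
proof -
  assume sL: "s \<le> L"
  define r where "r = seg s L w \<oplus> seg 0 s w"
  have f1: "seg s L w \<noteq> [] \<and> hd (seg s L w) = w ! s \<and> last (seg s L w) = w ! 0 \<and> wk V E (seg s L w) \<and> length (seg s L w) = Suc L - s"
    using seg_facts[of s L] sL wL by auto
  have f2: "seg 0 s w \<noteq> [] \<and> hd (seg 0 s w) = w ! 0 \<and> last (seg 0 s w) = w ! s \<and> wk V E (seg 0 s w) \<and> length (seg 0 s w) = Suc s"
    using seg_facts[of 0 s] sL by auto
  have r1: "wk V E r" using f1 f2 wk_cat r_def by metis
  have r2: "hd r = w ! s" using f1 cat_hd r_def by metis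
  have r3: "last r = w ! s" using f1 f2 cat_last r_def by metis
  have "length r = length (seg s L w) + length (seg 0 s w) - 1" using cat_len f2 r_def by metis
  then have r4: "length r = length w" using f1 f2 sL lenw by simp
  have r5: "r \<noteq> []" using f1 cat_ne r_def by metis
  note r = r1 r2 r3 r4 r5
  have nkr: "\<forall>Q. nk Q r = nk Q w"
  proof
    fix Q
    have "nk Q r = nk Q (seg s L w) + nk Q (seg 0 s w)" using f1 f2 nk_cat r_def by metis
    moreover have "nk Q w = nk Q (seg 0 s w) + nk Q (seg s L w)" using seg_split[of 0 s L Q] sL seg_w by simp
    ultimately show "nk Q r = nk Q w" by simp
  qed
  have "set w = set (seg 0 s w \<oplus> seg s L w)" using seg_cat[of 0 s L w] sL lenw seg_w by simp
  also have "\<dots> = set (seg 0 s w) \<union> set (seg s L w)" using f1 f2 cat_set by metis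
  also have "\<dots> = set r"
  proof -
    have "set r = set (seg s L w) \<union> set (seg 0 s w)" unfolding r_def by (rule cat_set) (use f1 f2 in auto)
    then show ?thesis by (simp add: Un_commute)
  qed
  finally have setr: "set r = set w" by simp
  have "mw V E n f P r" unfolding mw_def mw_axioms_def using pc_axioms Psym oddw minw r nkr by auto
  moreover have "r ! 0 = w ! s" using r by (simp add: hd_conv_nth)
  ultimately show ?thesis using setr nkr r_def by auto
qed

lemma X1: "E (w ! 0) z \<Longrightarrow> z \<notin> set w \<Longrightarrow> 0 < nk (\<lambda>x y. cls x y = cls (w ! 0) z) w \<Longrightarrow>
   cls (w ! 0) z \<in> Dd (w ! 0) (w ! (L div 2 - 1))"
proof (rule ccontr)
  assume ez: "E (w ! 0) z" and zn: "z \<notin> set w" and pos: "0 < nk (\<lambda>x y. cls x y = cls (w ! 0) z) w"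
  define m where "m = L div 2"
  define k where "k = cls (w ! 0) z"
  assume nX: "k \<notin> Dd (w ! 0) (w ! (L div 2 - 1))"
  then have nX: "k \<notin> Dd (w ! 0) (w ! (m - 1))" using m_def by simp
  have L2: "L = 2 * m" "m \<ge> 2" using Lge4 m_def by auto
  have fs1: "seg 0 m w \<noteq> [] \<and> hd (seg 0 m w) = w ! 0 \<and> last (seg 0 m w) = w ! m \<and> wk V E (seg 0 m w) \<and> length (seg 0 m w) = Suc m"
    using seg_facts[of 0 m] L2 by auto
  have fs2: "seg m L w \<noteq> [] \<and> hd (seg m L w) = w ! m \<and> last (seg m L w) = w ! 0 \<and> wk V E (seg m L w) \<and> length (seg m L w) = Suc m"
    using seg_facts[of m L] L2 wL by auto
  have i1: "m \<le> card (Dd (w ! 0) (w ! m))" using iso[of 0 m] L2 by simp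
  have i2: "m \<le> card (Dd (w ! m) (w ! L))" using iso[of m L] L2 by simp
  have g1: "geo (seg 0 m w)" using fs1 i1 wk_card[of "seg 0 m w"] unfolding geo_def by simp
  have g2: "geo (seg m L w)" using fs2 i2 wk_card[of "seg m L w"] wL unfolding geo_def by simp
  have "nk (\<lambda>x y. cls x y = k) w = nk (\<lambda>x y. cls x y = k) (seg 0 m w) + nk (\<lambda>x y. cls x y = k) (seg m L w)"
    using seg_split[of 0 m L] L2 seg_w by simp
  then have kX: "k \<in> Dd (w ! 0) (w ! m)" using pos k_def geo_nk[OF g1, of k] geo_nk[OF g2, of k] fs1 fs2 Dd_sym
    by (auto split: if_splits)
  have e1: "E (w ! (m - 1)) (w ! m)" using wk_nth[OF wkw, of "m - 1"] L2 lenw by simp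
  define l1 where "l1 = cls (w ! (m - 1)) (w ! m)"
  have m1: "\<And>q. q \<in> Dd (w ! 0) (w ! m) \<longleftrightarrow> (q \<in> Dd (w ! 0) (w ! (m - 1))) \<noteq> (q = l1)"
    using flip[OF e1] Dd_mem l1_def by auto
  have kl1: "k = l1" using m1[of k] kX nX by simp
  have c0: "card (Dd (w ! 0) (w ! (m - 1))) \<le> m - 1"
    using wk_card[of "seg 0 (m - 1) w"] seg_facts[of 0 "m - 1"] L2 by simp
  have e2: "E (w ! (L - 1)) (w ! L)" using wk_nth[OF wkw, of "L - 1"] L2 lenw by simp
  define l2 where "l2 = cls (w ! (L - 1)) (w ! L)"
  have a1: "m - 1 \<le> L - 1" "L - 1 \<le> L" "(L - 1) - (m - 1) = m" "L - ((L - 1) - (m - 1)) = m" using L2 by auto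
  have i3: "m \<le> card (Dd (w ! (m - 1)) (w ! (L - 1)))" using iso[OF a1(1) a1(2)] a1(3,4) by simp
  have fL: "\<And>q. q \<in> f (w ! (L - 1)) \<longleftrightarrow> (q \<in> f (w ! 0)) \<noteq> (q = l2)"
    using flip[OF e2] l2_def wL by auto
  define Y where "Y = Dd (w ! 0) (w ! (m - 1))"
  have dY: "Dd (w ! (m - 1)) (w ! (L - 1)) = {q. (q \<in> Y) \<noteq> (q = l2)}"
    using fL Dd_mem Y_def by auto
  have finY: "finite Y" using Y_def Dd_fin wnV L2 by auto
  have cY: "card (Dd (w ! (m - 1)) (w ! (L - 1))) = (if l2 \<in> Y then card Y - 1 else Suc (card Y))"
    unfolding dY by (rule card_flip[OF finY])
  have l2Y: "l2 \<notin> Y" using cY c0 i3 Y_def L2 by (cases "l2 \<in> Y") auto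
  have "Suc (L - 1 - m) < length (seg m L w)" using fs2 L2 by simp
  then have "cls (seg m L w ! (L - 1 - m)) (seg m L w ! Suc (L - 1 - m)) \<in> Dd (w ! m) (w ! 0)"
    using geo_step[OF g2] fs2 by metis
  moreover have "seg m L w ! (L - 1 - m) = w ! (L - 1)" using seg_nth[of m L w "L - 1 - m"] L2 lenw by simp
  moreover have "seg m L w ! Suc (L - 1 - m) = w ! L" using seg_nth[of m L w "Suc (L - 1 - m)"] L2 lenw by simp
  ultimately have "l2 \<in> Dd (w ! 0) (w ! m)" using l2_def Dd_sym by metis
  then have "l2 = k" using m1[of l2] l2Y Y_def kl1 by simp
  then have "Dd z (w ! (L - 1)) = {}" using fL flip[OF ez] k_def Dd_mem by auto
  moreover have "w ! (L - 1) \<in> V" using wnV[of "L - 1"] by simp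
  ultimately have "z = w ! (L - 1)" using inj EV(2)[OF ez] by blast
  moreover have "L - 1 < length w" using lenw L2 by simp
  then have "w ! (L - 1) \<in> set w" by (rule nth_mem)
  ultimately show False using zn by simp
qed


lemma bnd0: "E (w ! 0) z \<Longrightarrow> 0 < nk (\<lambda>x y. cls x y = cls (w ! 0) z) w \<Longrightarrow> z \<in> set w"
proof (rule ccontr)
  assume ez: "E (w ! 0) z" and pos: "0 < nk (\<lambda>x y. cls x y = cls (w ! 0) z) w" and zn: "z \<notin> set w"
  define m where "m = L div 2"
  define k where "k = cls (w ! 0) z"
  have L2: "L = 2 * m" "m \<ge> 2" using Lge4 m_def by auto
  have X1a: "k \<in> Dd (w ! 0) (w ! (m - 1))" using X1[OF ez zn pos] m_def k_def by simp
  interpret r: mw V E n f P "rev w" by (rule mw_rev)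
  have r0: "rev w ! 0 = w ! 0" using wL lenw rev_nth[of 0 w] w_ne by simp
  have rs: "set (rev w) = set w" by simp
  have rn: "nk (\<lambda>x y. cls x y = k) (rev w) = nk (\<lambda>x y. cls x y = k) w"
    by (rule nk_rev) (simp add: cls_sym)
  have "cls (rev w ! 0) z \<in> Dd (rev w ! 0) (rev w ! ((length (rev w) - 1) div 2 - 1))"
    using r.X1 ez r0 rs rn pos zn k_def by simp
  moreover have "rev w ! ((length (rev w) - 1) div 2 - 1) = w ! (m + 1)"
  proof -
    have e: "(length (rev w) - 1) div 2 - 1 = m - 1" by (simp add: m_def)
    have "m - 1 < length w" using L2 lenw by simp
    then have "rev w ! (m - 1) = w ! (length w - Suc (m - 1))" by (rule rev_nth)
    moreover have "length w - Suc (m - 1) = m + 1" using L2 lenw by simp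
    ultimately show ?thesis using e by simp
  qed
  ultimately have X2: "k \<in> Dd (w ! 0) (w ! (m + 1))" using r0 k_def by simp
  have zV: "z \<in> V" using EV(2)[OF ez] .
  have fz: "\<And>q. q \<in> f z \<longleftrightarrow> (q \<in> f (w ! 0)) \<noteq> (q = k)" using flip[OF ez] k_def by auto
  have fs0: "seg 0 (m - 1) w \<noteq> [] \<and> hd (seg 0 (m - 1) w) = w ! 0 \<and> last (seg 0 (m - 1) w) = w ! (m - 1) \<and> wk V E (seg 0 (m - 1) w) \<and> length (seg 0 (m - 1) w) = m"
    using seg_facts[of 0 "m - 1"] L2 by auto
  have fsA: "seg (m - 1) (m + 1) w \<noteq> [] \<and> hd (seg (m - 1) (m + 1) w) = w ! (m - 1) \<and> last (seg (m - 1) (m + 1) w) = w ! (m + 1) \<and> wk V E (seg (m - 1) (m + 1) w) \<and> length (seg (m - 1) (m + 1) w) = 3"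
    using seg_facts[of "m - 1" "m + 1"] L2 by auto
  have fs1: "seg (m + 1) L w \<noteq> [] \<and> hd (seg (m + 1) L w) = w ! (m + 1) \<and> last (seg (m + 1) L w) = w ! 0 \<and> wk V E (seg (m + 1) L w) \<and> length (seg (m + 1) L w) = m"
    using seg_facts[of "m + 1" L] L2 wL by auto
  have c1: "card (Dd (w ! 0) (w ! (m - 1))) \<le> m - 1" using wk_card[of "seg 0 (m - 1) w"] fs0 by simp
  have c2: "card (Dd (w ! 0) (w ! (m + 1))) \<le> m - 1" using wk_card[of "seg (m + 1) L w"] fs1 Dd_sym by simp
  have fin1: "finite (Dd (w ! 0) (w ! (m - 1)))" using Dd_fin wnV L2 by simp
  have fin2: "finite (Dd (w ! 0) (w ! (m + 1)))" using Dd_fin wnV L2 by simp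
  have d1: "Dd z (w ! (m - 1)) = {q. (q \<in> Dd (w ! 0) (w ! (m - 1))) \<noteq> (q = k)}" using fz Dd_mem by auto
  have d2: "Dd (w ! (m + 1)) z = {q. (q \<in> Dd (w ! 0) (w ! (m + 1))) \<noteq> (q = k)}" using fz Dd_mem by auto
  have cd1: "card (Dd z (w ! (m - 1))) = card (Dd (w ! 0) (w ! (m - 1))) - 1"
    unfolding d1 card_flip[OF fin1] using X1a by simp
  have cd2: "card (Dd (w ! (m + 1)) z) = card (Dd (w ! 0) (w ! (m + 1))) - 1"
    unfolding d2 card_flip[OF fin2] using X2 by simp
  obtain G1 where G1: "geo G1" "hd G1 = z" "last G1 = w ! (m - 1)" using geo_ex zV wnV L2 by (metis diff_le_self le_add1 mult_2 order_trans)
  obtain G2 where G2: "geo G2" "hd G2 = w ! (m + 1)" "last G2 = z" using geo_ex zV wnV[of "m + 1"] L2 by auto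
  have wG1: "wk V E G1" and wG2: "wk V E G2" using G1 G2 unfolding geo_def by auto
  have lG1: "length G1 \<le> m - 1" using G1 wG1 cd1 c1 L2 unfolding geo_def by (cases G1) auto
  have lG2: "length G2 \<le> m - 1" using G2 wG2 cd2 c2 L2 unfolding geo_def by (cases G2) auto
  define sB where "sB = rev (seg 0 (m - 1) w)"
  define sC where "sC = rev (seg (m + 1) L w)"
  have fB: "wk V E sB" "hd sB = w ! (m - 1)" "last sB = w ! 0" "length sB = m" "nk P sB = nk P (seg 0 (m - 1) w)"
    using fs0 wk_rev[of E] Esym nk_rev[OF Psym] sB_def by (auto simp: hd_rev last_rev)
  have fC: "wk V E sC" "hd sC = w ! 0" "last sC = w ! (m + 1)" "length sC = m" "nk P sC = nk P (seg (m + 1) L w)"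
    using fs1 wk_rev[of E] Esym nk_rev[OF Psym] sC_def by (auto simp: hd_rev last_rev)
  have w0: "w ! 0 \<in> V" using wnV by simp
  have we0: "wk V E [w ! 0, z]" "wk V E [z, w ! 0]" using ez Esym w0 zV by auto
  have nke: "nk P [z, w ! 0] = nk P [w ! 0, z]" using Psym by simp
  define A where "A = G1 \<oplus> seg (m - 1) (m + 1) w \<oplus> G2"
  define B1 where "B1 = G1 \<oplus> sB \<oplus> [w ! 0, z]"
  define B2 where "B2 = [z, w ! 0] \<oplus> sC \<oplus> G2"
  have hA: "wk V E A \<and> hd A = z \<and> last A = z \<and> nk P A = nk P G1 + nk P (seg (m - 1) (m + 1) w) + nk P G2
     \<and> length A = length G1 + 3 + length G2 - 2"
    using cat3[of G1 "seg (m - 1) (m + 1) w" G2 P] wG1 wG2 fsA G1 G2 A_def by simp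
  have hB1: "wk V E B1 \<and> hd B1 = z \<and> last B1 = z \<and> nk P B1 = nk P G1 + nk P sB + nk P [w ! 0, z]
     \<and> length B1 = length G1 + m + 2 - 2"
    using cat3[of G1 sB "[w ! 0, z]" P] wG1 fB we0 G1 B1_def by simp
  have hB2: "wk V E B2 \<and> hd B2 = z \<and> last B2 = z \<and> nk P B2 = nk P [w ! 0, z] + nk P sC + nk P G2
     \<and> length B2 = 2 + m + length G2 - 2"
    using cat3[of "[z, w ! 0]" sC G2 P] wG2 fC we0 G2 nke B2_def by simp
  have eA: "even (nk P A)" using hA lG1 lG2 L2 lenw by (intro short_even) auto
  have eB: "even (nk P B1)" using hB1 lG1 L2 lenw by (intro short_even) auto
  have eC: "even (nk P B2)" using hB2 lG2 L2 lenw by (intro short_even) auto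
  have sw: "nk P w = nk P (seg 0 (m - 1) w) + nk P (seg (m - 1) (m + 1) w) + nk P (seg (m + 1) L w)"
    using seg_split[of 0 "m - 1" L P] seg_split[of "m - 1" "m + 1" L P] L2 seg_w by simp
  have nA: "nk P A = nk P G1 + nk P (seg (m - 1) (m + 1) w) + nk P G2" using hA by simp
  have nB1: "nk P B1 = nk P G1 + nk P (seg 0 (m - 1) w) + nk P [w ! 0, z]" using hB1 fB by simp
  have nB2: "nk P B2 = nk P [w ! 0, z] + nk P (seg (m + 1) L w) + nk P G2" using hB2 fC by simp
  show False by (rule par3[OF eA eB eC sw nA nB1 nB2 oddw])
qed

lemma bnd: "c \<in> set w \<Longrightarrow> E c z \<Longrightarrow> 0 < nk (\<lambda>x y. cls x y = cls c z) w \<Longrightarrow> z \<in> set w"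
proof -
  assume c: "c \<in> set w" and ez: "E c z" and pos: "0 < nk (\<lambda>x y. cls x y = cls c z) w"
  obtain s where s: "s < length w" "w ! s = c" using c by (metis in_set_conv_nth)
  then have sL: "s \<le> L" by simp
  note R = rot[OF sL]
  interpret rr: mw V E n f P "seg s L w \<oplus> seg 0 s w" using R by blast
  have "z \<in> set (seg s L w \<oplus> seg 0 s w)" using rr.bnd0 R s ez pos by simp
  then show ?thesis using R by simp
qed


lemma cs_len: "length (butlast w) = L" by simp
lemma cs_nth: "s < L \<Longrightarrow> butlast w ! s = w ! s" by (simp add: nth_butlast)
lemma cs_set: "set (butlast w) = set w"
proof -
  have "4 \<le> L" using Lge4 by blast
  then have L0: "0 < L" by simp
  have "w = butlast w @ [last w]" using w_ne by simp
  then have "set w = set (butlast w) \<union> {last w}" by (metis set_append list.set(1) list.simps(15))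
  moreover have "last w = butlast w ! 0" using clw w_ne cs_nth[OF L0] by (simp add: hd_conv_nth)
  moreover have "butlast w ! 0 \<in> set (butlast w)" using L0 by (simp add: nth_mem)
  ultimately show ?thesis by auto
qed

lemma adj: "\<alpha> < L \<Longrightarrow> \<beta> < L \<Longrightarrow> \<alpha> < \<beta> \<Longrightarrow> card (Dd (w ! \<alpha>) (w ! \<beta>)) \<le> 1 \<Longrightarrow> \<beta> = Suc \<alpha> \<or> (\<alpha> = 0 \<and> \<beta> = L - 1)"
proof -
  assume h: "\<alpha> < L" "\<beta> < L" "\<alpha> < \<beta>" "card (Dd (w ! \<alpha>) (w ! \<beta>)) \<le> 1"
  have "min (\<beta> - \<alpha>) (L - (\<beta> - \<alpha>)) \<le> 1" using iso[of \<alpha> \<beta>] h by simp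
  then show ?thesis using h by auto
qed

lemma in_ce: "\<alpha> < L \<Longrightarrow> \<beta> < L \<Longrightarrow> (\<beta> = Suc \<alpha> \<or> (\<alpha> = 0 \<and> \<beta> = L - 1) \<or> \<alpha> = Suc \<beta> \<or> (\<beta> = 0 \<and> \<alpha> = L - 1)) \<Longrightarrow>
   (butlast w ! \<alpha>, butlast w ! \<beta>) \<in> cycle_edges (butlast w)"
proof -
  assume h: "\<alpha> < L" "\<beta> < L" "\<beta> = Suc \<alpha> \<or> (\<alpha> = 0 \<and> \<beta> = L - 1) \<or> \<alpha> = Suc \<beta> \<or> (\<beta> = 0 \<and> \<alpha> = L - 1)"
  have L0: "0 < L" using h by simp
  let ?c = "butlast w"
  have A: "\<And>i. i < L \<Longrightarrow> (?c ! i, ?c ! ((i + 1) mod L)) \<in> cycle_edges ?c"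
    unfolding cycle_edges_def using cs_len by auto
  have B: "\<And>i. i < L \<Longrightarrow> (?c ! ((i + 1) mod L), ?c ! i) \<in> cycle_edges ?c"
    unfolding cycle_edges_def using cs_len by auto
  show ?thesis
  proof (cases "\<beta> = Suc \<alpha>")
    case True then show ?thesis using A[of \<alpha>] h by simp
  next
    case F1: False
    show ?thesis
    proof (cases "\<alpha> = 0 \<and> \<beta> = L - 1")
      case True
      have "L - 1 + 1 = L" using L0 by simp
      then have "(L - 1 + 1) mod L = 0" by simp
      then show ?thesis using B[of "L - 1"] True L0 by simp
    next
      case F2: False
      show ?thesis
      proof (cases "\<alpha> = Suc \<beta>")
        case True then show ?thesis using B[of \<beta>] h by simp
      next
        case False
        then have "\<beta> = 0 \<and> \<alpha> = L - 1" using h F1 F2 by blast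
        moreover have "L - 1 + 1 = L" using L0 by simp
        moreover have "(L - 1 + 1) mod L = 0" using calculation(2) by simp
        ultimately show ?thesis using A[of "L - 1"] L0 by simp
      qed
    qed
  qed
qed

lemma edge_ex: "0 < nk Q w \<Longrightarrow> \<exists>x y. (x, y) \<in> cycle_edges (butlast w) \<and> E x y \<and> Q x y"
proof -
  assume "0 < nk Q w"
  then obtain s where s: "Suc s < length w" "Q (w ! s) (w ! Suc s)" using nk_pos_ex by blast
  have e: "E (w ! s) (w ! Suc s)" using wk_nth[OF wkw s(1)] .
  have sL: "s < L" using s by simp
  have "(butlast w ! s, butlast w ! ((s + 1) mod L)) \<in> cycle_edges (butlast w)"
    unfolding cycle_edges_def using cs_len sL by auto
  moreover have "butlast w ! s = w ! s" using cs_nth sL by simp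
  moreover have "butlast w ! ((s + 1) mod L) = w ! Suc s"
  proof (cases "Suc s < L")
    case True then show ?thesis using cs_nth by simp
  next
    case False
    then have "Suc s = L" using sL by simp
    then show ?thesis using cs_nth[of 0] wL sL by simp
  qed
  ultimately show ?thesis using e s by metis
qed

lemma conv: "convex_cycle V E (butlast w)"
proof -
  let ?c = "butlast w"
  have L4: "4 \<le> L" using Lge4 by simp
  have cyc: "is_cycle V E ?c"
    unfolding is_cycle_def
  proof (intro conjI)
    show "3 \<le> length ?c" using L4 by simp
    show "set ?c \<subseteq> V" using cs_set wV by simp
    show "distinct ?c" unfolding distinct_conv_nth
    proof (intro allI impI)
      fix i j assume ij: "i < length ?c" "j < length ?c" "i \<noteq> j"
      show "?c ! i \<noteq> ?c ! j"
      proof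
        assume eq: "?c ! i = ?c ! j"
        define a where "a = min i j"
        define b where "b = max i j"
        have ab: "a < b" "b < L" using ij a_def b_def by auto
        have "w ! a = w ! b" using eq ij cs_nth a_def b_def by (cases "i < j") (auto simp: min_def max_def)
        then have "card (Dd (w ! a) (w ! b)) = 0" by simp
        moreover have "min (b - a) (L - (b - a)) \<le> card (Dd (w ! a) (w ! b))" using iso ab by simp
        ultimately show False using ab by simp
      qed
    qed
    show "\<forall>i < length ?c. E (?c ! i) (?c ! ((i + 1) mod length ?c))"
    proof (intro allI impI)
      fix i assume i: "i < length ?c"
      have e: "E (w ! i) (w ! Suc i)" using wk_nth[OF wkw] i by simp
      show "E (?c ! i) (?c ! ((i + 1) mod length ?c))"
      proof (cases "Suc i < L")
        case True then show ?thesis using e cs_nth i by simp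
      next
        case False
        then have "Suc i = L" using i by simp
        then show ?thesis using e cs_nth[of 0] cs_nth[of i] wL i by simp
      qed
    qed
  qed
  have cv: "convex_subgraph V E (set ?c) (cycle_edges ?c)"
    unfolding convex_subgraph_def
  proof (intro ballI allI impI)
    fix u v p
    assume u: "u \<in> set ?c" and v: "v \<in> set ?c" and pp: "walk_betw V E u p v \<and> length p = Suc (dist V E u v)"
    have g: "geo p" using pp geo_of by blast
    have wp: "wk V E p" using g unfolding geo_def by simp
    have hp: "hd p = u" "last p = v" using pp unfolding walk_betw_def by auto
    obtain a where a: "a < L" "w ! a = u" using u cs_set cs_len cs_nth by (metis in_set_conv_nth)
    obtain b where b: "b < L" "w ! b = v" using v cs_set cs_len cs_nth by (metis in_set_conv_nth)
    have K: "\<And>k. k \<in> Dd u v \<Longrightarrow> 0 < nk (\<lambda>x y. cls x y = k) w"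
    proof -
      fix k assume k: "k \<in> Dd u v"
      show "0 < nk (\<lambda>x y. cls x y = k) w"
      proof (cases "a \<le> b")
        case True
        have "k \<in> Dd (hd (seg a b w)) (last (seg a b w))" using seg_facts[of a b] True b a k by simp
        moreover have "wk V E (seg a b w)" using seg_facts[of a b] True b by simp
        ultimately have "odd (nk (\<lambda>x y. cls x y = k) (seg a b w))" using parity by blast
        then have "0 < nk (\<lambda>x y. cls x y = k) (seg a b w)" by (rule odd_pos)
        then show ?thesis using seg_le[of a b] True b by (meson less_le_trans less_imp_le)
      next
        case False
        have "k \<in> Dd (hd (seg b a w)) (last (seg b a w))" using seg_facts[of b a] False b a k Dd_sym by simp
        moreover have "wk V E (seg b a w)" using seg_facts[of b a] False a by simp
        ultimately have "odd (nk (\<lambda>x y. cls x y = k) (seg b a w))" using parity by blast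
        then have "0 < nk (\<lambda>x y. cls x y = k) (seg b a w)" by (rule odd_pos)
        then show ?thesis using seg_le[of b a] False a by (meson less_le_trans less_imp_le not_le)
      qed
    qed
    have allin: "\<And>s. s < length p \<Longrightarrow> p ! s \<in> set w"
    proof -
      fix s show "s < length p \<Longrightarrow> p ! s \<in> set w"
      proof (induction s)
        case 0
        then have "p ! 0 = u" using hp by (simp add: hd_conv_nth[symmetric])
        then show ?case using u cs_set by simp
      next
        case (Suc s)
        have ps: "p ! s \<in> set w" using Suc by simp
        have e: "E (p ! s) (p ! Suc s)" using wk_nth[OF wp] Suc.prems .
        have "cls (p ! s) (p ! Suc s) \<in> Dd u v" using geo_step[OF g Suc.prems] hp by simp
        then have "0 < nk (\<lambda>x y. cls x y = cls (p ! s) (p ! Suc s)) w" using K by blast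
        then show ?case using bnd[OF ps e] by blast
      qed
    qed
    have S1: "set p \<subseteq> set ?c" using allin cs_set by (metis in_set_conv_nth subsetI)
    have S2: "\<forall>i. Suc i < length p \<longrightarrow> (p ! i, p ! Suc i) \<in> cycle_edges ?c"
    proof (intro allI impI)
      fix i assume i: "Suc i < length p"
      have x: "p ! i \<in> set w" and y: "p ! Suc i \<in> set w" using allin i by auto
      obtain \<alpha> where al: "\<alpha> < L" "w ! \<alpha> = p ! i" using x cs_set cs_len cs_nth by (metis in_set_conv_nth)
      obtain \<beta> where be: "\<beta> < L" "w ! \<beta> = p ! Suc i" using y cs_set cs_len cs_nth by (metis in_set_conv_nth)
      have e: "E (p ! i) (p ! Suc i)" using wk_nth[OF wp i] .
      have c1: "card (Dd (w ! \<alpha>) (w ! \<beta>)) = 1" using edge_Dd[OF e] al be by simp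
      have ne: "\<alpha> \<noteq> \<beta>" using Eneq[OF e] al be by auto
      have "\<beta> = Suc \<alpha> \<or> (\<alpha> = 0 \<and> \<beta> = L - 1) \<or> \<alpha> = Suc \<beta> \<or> (\<beta> = 0 \<and> \<alpha> = L - 1)"
      proof (cases "\<alpha> < \<beta>")
        case True then show ?thesis using adj[of \<alpha> \<beta>] al be c1 by simp
      next
        case False
        then have "\<beta> < \<alpha>" using ne by simp
        then show ?thesis using adj[of \<beta> \<alpha>] al be c1 Dd_sym by simp
      qed
      then have "(?c ! \<alpha>, ?c ! \<beta>) \<in> cycle_edges ?c" using in_ce al be by blast
      then show "(p ! i, p ! Suc i) \<in> cycle_edges ?c" using cs_nth al be by simp
    qed
    show "set p \<subseteq> set ?c \<and> (\<forall>i. Suc i < length p \<longrightarrow> (p ! i, p ! Suc i) \<in> cycle_edges ?c)"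
      using S1 S2 by blast
  qed
  show ?thesis unfolding convex_cycle_def using cyc cv by simp
qed

end


context he
begin

lemma main:
  assumes eab: "E a b" and ecd: "E c d" and nt: "\<not> Theta V E (a, b) (c, d)"
  shows "\<exists>cs. convex_cycle V E cs \<and> (\<exists>e \<in> cycle_edges cs. Theta V E (a, b) e) \<and>
           (\<exists>e \<in> cycle_edges cs. Theta V E (c, d) e)"
proof -
  define i where "i = cls a b"
  define j where "j = cls c d"
  have ij: "i \<noteq> j" using theta_same[OF eab ecd] nt i_def j_def by blast
  have Va: "a \<in> V" and Vb: "b \<in> V" and Vc: "c \<in> V" using eab ecd EV by auto
  define X where "X = Dd a (anti a)"
  have iX: "i \<in> X" using anti_cls[OF eab] i_def X_def by simp
  have jX: "j \<in> X" using anti_cls[OF ecd] j_def X_def anti_const[OF Vc Va] by simp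
  have Xb: "Dd b (anti b) = X" using anti_inv[OF eab] X_def by simp
  have aa: "anti a \<in> V" "anti b \<in> V" using anti_prop Va Vb by auto
  have fa: "\<And>q. q \<in> f (anti a) \<longleftrightarrow> (q \<in> f a) \<noteq> (q \<in> X)" using Dd_mem X_def by auto
  have fb': "\<And>q. q \<in> f (anti b) \<longleftrightarrow> (q \<in> f b) \<noteq> (q \<in> X)" using Dd_mem Xb by auto
  have fb: "\<And>q. q \<in> f b \<longleftrightarrow> (q \<in> f a) \<noteq> (q = i)" using flip[OF eab] i_def by auto
  define g where "g = (i \<in> f b)"
  define P where "P = SS i j g"
  have Psym: "\<And>x y. P x y = P y x" using SS_sym P_def by simp
  obtain G1 where G1: "geo G1" "hd G1 = b" "last G1 = anti a" using geo_ex Vb aa by blast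
  obtain G2 where G2: "geo G2" "hd G2 = anti a" "last G2 = anti b" using geo_ex aa by blast
  obtain G3 where G3: "geo G3" "hd G3 = anti b" "last G3 = a" using geo_ex Va aa by blast
  obtain G4 where G4: "geo G4" "hd G4 = a" "last G4 = b" using geo_ex Va Vb by blast
  have m1: "i \<notin> Dd b (anti a)" "j \<in> Dd b (anti a)" using Dd_mem fa fb ij iX jX by auto
  have m2: "j \<notin> Dd (anti a) (anti b)" using Dd_mem fa fb' fb ij by auto
  have m3: "i \<notin> Dd (anti b) a" "(i \<in> f (anti b)) \<noteq> g" using Dd_mem fb' fb iX g_def by auto
  have m4: "j \<notin> Dd a b" using Dd_mem fb ij by auto
  have n1: "nk P G1 = 1" using geo_SS1[OF G1(1), of i j g] G1 m1 g_def P_def by simp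
  have n2: "nk P G2 = 0" using geo_SS0[OF G2(1), of j i g] G2 m2 P_def by simp
  have n3: "nk P G3 = 0" using geo_SS1[OF G3(1), of i j g] G3 m3 P_def by simp
  have n4: "nk P G4 = 0" using geo_SS0[OF G4(1), of j i g] G4 m4 P_def by simp
  have w: "wk V E G1" "wk V E G2" "wk V E G3" "wk V E G4" using G1 G2 G3 G4 unfolding geo_def by auto
  define T where "T = G1 \<oplus> G2 \<oplus> G3"
  have c3: "wk V E T \<and> hd T = hd G1 \<and> last T = last G3 \<and> nk P T = nk P G1 + nk P G2 + nk P G3"
    unfolding T_def using cat3[OF w(1) w(2) w(3)] G1(3) G2(2) G2(3) G3(2) by metis
  have T: "wk V E T \<and> hd T = b \<and> last T = a \<and> nk P T = 1"
    using c3 G1(2) G3(3) n1 n2 n3 by simp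
  define W0 where "W0 = T \<oplus> G4"
  have W0: "wk V E W0" "hd W0 = last W0" "odd (nk P W0)"
  proof -
    have neT: "T \<noteq> []" using T by auto
    have ne4: "G4 \<noteq> []" using w by auto
    show "wk V E W0" using wk_cat T w(4) G4 W0_def by metis
    show "hd W0 = last W0" using cat_hd[OF neT] cat_last[OF neT ne4] T G4 W0_def by simp
    show "odd (nk P W0)" using nk_cat[OF neT ne4] T G4 n4 W0_def by simp
  qed
  have "\<exists>x. (wk V E x \<and> hd x = last x \<and> odd (nk P x)) \<and>
      (\<forall>y. (wk V E y \<and> hd y = last y \<and> odd (nk P y)) \<longrightarrow> length x \<le> length y)"
    by (rule ex_has_least_nat[of "\<lambda>x. wk V E x \<and> hd x = last x \<and> odd (nk P x)" W0 length]) (use W0 in blast)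
  then obtain w0 where w0: "wk V E w0" "hd w0 = last w0" "odd (nk P w0)"
    and mn: "\<And>y. wk V E y \<Longrightarrow> hd y = last y \<Longrightarrow> odd (nk P y) \<Longrightarrow> length w0 \<le> length y" by blast
  have mwi: "mw V E n f P w0"
  proof (rule mw.intro[OF pc_axioms], rule mw_axioms.intro)
    show "\<And>x y. P x y = P y x" by (rule Psym)
    show "wk V E w0" "hd w0 = last w0" "odd (nk P w0)" using w0 by auto
    show "\<And>w'. wk V E w' \<Longrightarrow> hd w' = last w' \<Longrightarrow> odd (nk P w') \<Longrightarrow> length w0 \<le> length w'" by (rule mn)
  qed
  interpret M: mw V E n f P w0 by (rule mwi)
  have posP: "0 < nk P w0" using w0(3) by (rule odd_pos)
  have jpos: "0 < nk (\<lambda>x y. cls x y = j) w0"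
  proof -
    have "nk P w0 \<le> nk (\<lambda>x y. cls x y = j) w0" by (rule nk_mono) (simp add: P_def SS_def)
    then show ?thesis using posP by simp
  qed
  have ipos: "0 < nk (\<lambda>x y. cls x y = i) w0"
  proof (rule ccontr)
    assume "\<not> 0 < nk (\<lambda>x y. cls x y = i) w0"
    then have z: "nk (\<lambda>x y. cls x y = i) w0 = 0" by simp
    have "j \<notin> Dd (hd w0) (last w0)" using w0(2) by simp
    then have "even (nk (\<lambda>x y. cls x y = j) w0)" using parity[OF w0(1)] by blast
    then have "even (nk P w0)" using nkS_const[OF w0(1) z, of j g] P_def by simp
    then show False using w0(3) by simp
  qed
  obtain x y where xy: "(x, y) \<in> cycle_edges (butlast w0)" "E x y" "cls x y = i" using M.edge_ex[OF ipos] by blast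
  obtain x' y' where xy': "(x', y') \<in> cycle_edges (butlast w0)" "E x' y'" "cls x' y' = j" using M.edge_ex[OF jpos] by blast
  have "Theta V E (a, b) (x, y)" using theta_same[OF eab xy(2)] xy(3) i_def by simp
  moreover have "Theta V E (c, d) (x', y')" using theta_same[OF ecd xy'(2)] xy'(3) j_def by simp
  ultimately show ?thesis using M.conv xy(1) xy'(1) by blast
qed

end

theorem lemma2:
  fixes V :: "'a set" and E :: "'a \<Rightarrow> 'a \<Rightarrow> bool" and a b c d :: 'a
  assumes "finite V"
    and "partial_cube V E"
    and "harmonic_even V E"
    and "E a b" and "E c d"
    and "\<not> Theta V E (a, b) (c, d)"
  shows "\<exists>cs. convex_cycle V E cs \<and>
           (\<exists>e \<in> cycle_edges cs. Theta V E (a, b) e) \<and>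
           (\<exists>e \<in> cycle_edges cs. Theta V E (c, d) e)"
proof -
  have pc0: "graph V E \<and> connected_graph V E \<and> (\<exists>(n::nat) (f :: 'a \<Rightarrow> nat set). (\<forall>v\<in>V. f v \<subseteq> {..<n}) \<and>
        (\<forall>u\<in>V. \<forall>v\<in>V. dist V E u v = card ((f u - f v) \<union> (f v - f u))))"
    using assms(2) by (simp only: partial_cube_def)
  have g: "graph V E" "connected_graph V E" using pc0 by simp_all
  have ex: "\<exists>(n::nat) (f :: 'a \<Rightarrow> nat set). (\<forall>v\<in>V. f v \<subseteq> {..<n}) \<and>
        (\<forall>u\<in>V. \<forall>v\<in>V. dist V E u v = card ((f u - f v) \<union> (f v - f u)))"
    using pc0 by (rule conjunct2[THEN conjunct2])
  then obtain n :: nat and f :: "'a \<Rightarrow> nat set" where nf0: "(\<forall>v\<in>V. f v \<subseteq> {..<n}) \<and>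
        (\<forall>u\<in>V. \<forall>v\<in>V. dist V E u v = card ((f u - f v) \<union> (f v - f u)))"
    by (elim exE)
  have nf: "\<forall>v\<in>V. f v \<subseteq> {..<n}" "\<forall>u\<in>V. \<forall>v\<in>V. dist V E u v = card ((f u - f v) \<union> (f v - f u))"
    using nf0 by (rule conjunct1, rule conjunct2)
  have pcI: "pc V E n f" by (rule pc.intro[OF g(1) g(2) nf(1) nf(2)])
  have heI: "he V E n f" by (rule he.intro[OF pcI], rule he_axioms.intro[OF assms(3) assms(1)])
  show ?thesis by (rule he.main[OF heI assms(4) assms(5) assms(6)])
qed

end
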